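(* Let $\varphi$ be an increasing concave function on $[0,1]$ with $\varphi(0)=0$, $\varphi(1)=1$ and $\lim_{t\to0}\varphi(t)/t=\infty$. Then there is a function $f\in\varLambda_\varphi$ with $\int_0^1f(t)\,dt\ne0$ such that $\|1-\lambda f\|_{\varLambda_\varphi}\ge1$ for every $\lambda\in\mathbb{R}$.
   Context: The Lorentz space $\varLambda_\varphi$ consists of measurable $x$ on $[0,1]$ with $\|x\|_{\varLambda_\varphi}=\int_0^1x^*(t)\,d\varphi(t)<\infty$, where $x^*$ is the decreasing right-continuous rearrangement of $|x|$; $1$ denotes the function identically equal to $1$ on $[0,1]$. *)

theory Defs
  imports "HOL-Analysis.Analysis"
begin

definition distr_fun :: "(real \<Rightarrow> real) \<Rightarrow> ennreal \<Rightarrow> ennreal" where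
  "distr_fun x s = emeasure lebesgue {u \<in> {0..1}. s < ennreal \<bar>x u\<bar>}"

text \<open>Decreasing right-continuous rearrangement x* of |x| (possibly infinite at 0).\<close>
definition decr_rearr :: "(real \<Rightarrow> real) \<Rightarrow> real \<Rightarrow> ennreal" where
  "decr_rearr x t = Inf {s. distr_fun x s \<le> ennreal t}"

text \<open>Right-continuous distribution function generating the Lebesgue--Stieltjes measure d phi
  on [0,1]; a possible jump phi(0+) at 0 is recorded as a point mass at 0.\<close>
definition phi_rc :: "(real \<Rightarrow> real) \<Rightarrow> real \<Rightarrow> real" where
  "phi_rc \<phi> t = (if t < 0 then 0 else if 1 \<le> t then \<phi> 1 else Inf (\<phi> ` {t<..1}))"

definition lorentz_norm :: "(real \<Rightarrow> real) \<Rightarrow> (real \<Rightarrow> real) \<Rightarrow> ennreal" where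
  "lorentz_norm \<phi> x =
     (\<integral>\<^sup>+ t. decr_rearr x t * indicator {0..1} t \<partial>(interval_measure (phi_rc \<phi>)))"

definition lorentz_space :: "(real \<Rightarrow> real) \<Rightarrow> (real \<Rightarrow> real) set" where
  "lorentz_space \<phi> = {x. x \<in> borel_measurable (restrict_space lebesgue {0..1})
                           \<and> lorentz_norm \<phi> x < \<infinity>}"

end

theory Submission
  imports Defs "HOL-Probability.Distribution_Functions"
begin

lemma phi_facts:
  fixes \<phi> :: "real \<Rightarrow> real"
  assumes mono: "mono_on {0..1} \<phi>" and conc: "concave_on {0..1} \<phi>"
    and p0: "\<phi> 0 = 0" and p1: "\<phi> 1 = 1" and t: "0 \<le> t" "t \<le> 1"
  shows "0 \<le> \<phi> t" "t \<le> \<phi> t"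
proof -
  show "0 \<le> \<phi> t" using mono t p0 by (metis atLeastAtMost_iff mono_onD order_refl zero_le_one)
  have "\<phi> ((1 - t) *\<^sub>R 0 + t *\<^sub>R 1) \<ge> (1 - t) * \<phi> 0 + t * \<phi> 1"
    by (rule concave_onD[OF conc]) (use t in auto)
  then show "t \<le> \<phi> t" using p0 p1 by simp
qed

lemma rc_ge:
  fixes \<phi> :: "real \<Rightarrow> real"
  assumes mono: "mono_on {0..1} \<phi>" and p0: "\<phi> 0 = 0" and t: "0 \<le> t" "t < 1"
  shows "\<phi> t \<le> phi_rc \<phi> t"
proof -
  have nn: "0 \<le> \<phi> s" if "0 \<le> s" "s \<le> 1" for s
    using mono p0 that by (metis atLeastAtMost_iff mono_onD order_refl zero_le_one)
  have bdd: "bdd_below (\<phi> ` {t<..1})"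
    by (rule bdd_belowI[of _ 0]) (use nn t in auto)
  show ?thesis unfolding phi_rc_def using t
    by (auto intro!: cInf_greatest mono_onD[OF mono] bdd)
qed

lemma rc_nonneg:
  fixes \<phi> :: "real \<Rightarrow> real"
  assumes mono: "mono_on {0..1} \<phi>" and p0: "\<phi> 0 = 0"
  shows "0 \<le> phi_rc \<phi> t"
proof -
  have nn: "0 \<le> \<phi> s" if "0 \<le> s" "s \<le> 1" for s
    using mono p0 that by (metis atLeastAtMost_iff mono_onD order_refl zero_le_one)
  show ?thesis unfolding phi_rc_def
    by (auto intro!: cInf_greatest nn)
qed

lemma rc_mono:
  fixes \<phi> :: "real \<Rightarrow> real"
  assumes mono: "mono_on {0..1} \<phi>" and p0: "\<phi> 0 = 0" and xy: "x \<le> y"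
  shows "phi_rc \<phi> x \<le> phi_rc \<phi> y"
proof -
  have nn: "0 \<le> \<phi> s" if "0 \<le> s" "s \<le> 1" for s
    using mono p0 that by (metis atLeastAtMost_iff mono_onD order_refl zero_le_one)
  have bdd: "bdd_below (\<phi> ` {t<..1})" if "0 \<le> t" for t
    by (rule bdd_belowI[of _ 0]) (use nn that in auto)
  consider "x < 0" | "0 \<le> x" "y < 1" | "0 \<le> x" "x < 1" "1 \<le> y" | "1 \<le> x"
    by linarith
  then show ?thesis
  proof cases
    case 1
    then show ?thesis using rc_nonneg[OF mono p0, of y] by (simp add: phi_rc_def)
  next
    case 2
    then show ?thesis unfolding phi_rc_def using xy
      by (auto intro!: cInf_superset_mono bdd)
  next
    case 3
    then show ?thesis unfolding phi_rc_def using xy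
      by (auto intro!: cInf_lower bdd)
  next
    case 4
    then show ?thesis unfolding phi_rc_def using xy by auto
  qed
qed

lemma rc_rcont:
  fixes \<phi> :: "real \<Rightarrow> real"
  assumes mono: "mono_on {0..1} \<phi>" and p0: "\<phi> 0 = 0"
  shows "continuous (at_right a) (phi_rc \<phi>)"
proof -
  let ?F = "phi_rc \<phi>"
  have nn: "0 \<le> \<phi> s" if "0 \<le> s" "s \<le> 1" for s
    using mono p0 that by (metis atLeastAtMost_iff mono_onD order_refl zero_le_one)
  have bdd: "bdd_below (\<phi> ` {t<..1})" if "0 \<le> t" for t
    by (rule bdd_belowI[of _ 0]) (use nn that in auto)
  have "(?F \<longlongrightarrow> ?F a) (at_right a)"
  proof (rule order_tendstoI)
    fix y assume "y < ?F a"
    then show "\<forall>\<^sub>F x in at_right a. y < ?F x"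
      unfolding eventually_at_right_field
      by (intro exI[of _ "a+1"]) (auto intro: less_le_trans[OF _ rc_mono[OF mono p0]])
  next
    fix y assume y: "?F a < y"
    consider "a < 0" | "1 \<le> a" | "0 \<le> a" "a < 1" by linarith
    then show "\<forall>\<^sub>F x in at_right a. ?F x < y"
    proof cases
      case 1
      then show ?thesis using y unfolding eventually_at_right_field
        by (intro exI[of _ 0]) (auto simp: phi_rc_def)
    next
      case 2
      then show ?thesis using y unfolding eventually_at_right_field
        by (intro exI[of _ "a+1"]) (auto simp: phi_rc_def)
    next
      case 3
      then have "Inf (\<phi> ` {a<..1}) < y" using y by (simp add: phi_rc_def)
      then obtain z where z: "z \<in> {a<..1}" "\<phi> z < y"
        using 3 by (subst (asm) cInf_less_iff) (auto intro: bdd)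
      show ?thesis unfolding eventually_at_right_field
      proof (intro exI[of _ z] conjI allI impI)
        show "a < z" using z by auto
        fix x assume x: "a < x" "x < z"
        then have "?F x = Inf (\<phi> ` {x<..1})" using 3 z by (simp add: phi_rc_def)
        also have "\<dots> \<le> \<phi> z" using x z 3 by (auto intro!: cInf_lower bdd)
        finally show "?F x < y" using z by simp
      qed
    qed
  qed
  then show ?thesis by (simp add: continuous_within)
qed

lemma rc_Icc:
  fixes \<phi> :: "real \<Rightarrow> real"
  assumes mono: "mono_on {0..1} \<phi>" and p0: "\<phi> 0 = 0" and b: "0 \<le> b"
  shows "emeasure (interval_measure (phi_rc \<phi>)) {0..b} = phi_rc \<phi> b"
proof -
  let ?F = "phi_rc \<phi>" let ?M = "interval_measure ?F"
  have lim: "(?F \<longlongrightarrow> 0) at_bot"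
    by (rule tendsto_eventually) (auto simp: eventually_at_bot_linorder phi_rc_def intro!: exI[of _ "-1"])
  have Iic: "emeasure ?M {..x} = ?F x" for x
    by (rule emeasure_interval_measure_Iic[OF rc_mono[OF mono p0] rc_rcont[OF mono p0] lim])
  have eq: "{..<0::real} = (\<Union>n::nat. {.. -1/Suc n})"
  proof (intro set_eqI iffI)
    fix x :: real assume "x \<in> {..<0}"
    then have "x < 0" by simp
    then obtain n :: nat where "1 / Suc n < -x"
      by (metis neg_0_less_iff_less nat_approx_posE)
    then show "x \<in> (\<Union>n::nat. {.. -1/Suc n})" by (auto intro!: exI[of _ n])
  next
    fix x :: real assume "x \<in> (\<Union>n::nat. {.. -1/Suc n})"
    then obtain n :: nat where "x \<le> -1/Suc n" by auto
    moreover have "-1/Suc n < (0::real)" by simp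
    ultimately show "x \<in> {..<0}" unfolding lessThan_iff by linarith
  qed
  have null: "{..<0::real} \<in> null_sets ?M"
    unfolding eq
  proof (rule null_sets_UN)
    fix n :: nat
    show "{.. -1/Suc n} \<in> null_sets ?M"
      by (rule null_setsI) (auto simp: Iic phi_rc_def)
  qed
  have "{0..b} = {..b} - {..<0}" by auto
  then have "emeasure ?M {0..b} = emeasure ?M {..b}"
    using emeasure_Diff_null_set[OF null, of "{..b}"] by simp
  then show ?thesis by (simp add: Iic)
qed

lemma decr_ge:
  fixes x :: "real \<Rightarrow> real"
  assumes xm: "x \<in> borel_measurable lebesgue" and S: "S \<in> sets lebesgue" "S \<subseteq> {0..1}"
    and lt: "ennreal t < emeasure lebesgue S" and R: "\<forall>u\<in>S. R \<le> \<bar>x u\<bar>"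
  shows "ennreal R \<le> decr_rearr x t"
  unfolding decr_rearr_def
proof (rule Inf_greatest, clarify)
  fix s assume d: "distr_fun x s \<le> ennreal t"
  show "ennreal R \<le> s"
  proof (rule ccontr)
    assume "\<not> ennreal R \<le> s"
    then have sR: "s < ennreal R" by simp
    have sub: "S \<subseteq> {u \<in> {0..1}. s < ennreal \<bar>x u\<bar>}"
      using S(2) R sR by (auto intro: less_le_trans ennreal_leI)
    have meas: "{u \<in> {0..1}. s < ennreal \<bar>x u\<bar>} \<in> sets lebesgue"
    proof -
      have "(\<lambda>u. ennreal \<bar>x u\<bar>) \<in> borel_measurable lebesgue" using xm by measurable
      then have "{u \<in> space lebesgue. s < ennreal \<bar>x u\<bar>} \<in> sets lebesgue" by measurable
      moreover have "{0..1::real} \<in> sets lebesgue" by simp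
      ultimately have "{0..1} \<inter> {u \<in> space lebesgue. s < ennreal \<bar>x u\<bar>} \<in> sets lebesgue" by blast
      moreover have "{0..1} \<inter> {u \<in> space lebesgue. s < ennreal \<bar>x u\<bar>} = {u \<in> {0..1}. s < ennreal \<bar>x u\<bar>}"
        by auto
      ultimately show ?thesis by simp
    qed
    have "emeasure lebesgue S \<le> distr_fun x s"
      unfolding distr_fun_def by (rule emeasure_mono[OF sub meas])
    with d lt show False by simp
  qed
qed

lemma norm_lower:
  fixes \<phi> x :: "real \<Rightarrow> real"
  assumes mono: "mono_on {0..1} \<phi>" and p0: "\<phi> 0 = 0"
    and xm: "x \<in> borel_measurable lebesgue" and S: "S \<in> sets lebesgue" "S \<subseteq> {0..1}"
    and lt: "ennreal t1 < emeasure lebesgue S" and PS: "\<forall>u\<in>S. P \<le> \<bar>x u\<bar>"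
    and Q01: "\<forall>u\<in>{0..1}. Q \<le> \<bar>x u\<bar>"
    and t1: "0 \<le> t1" "t1 \<le> c" "c < 1" and PQ: "0 \<le> P" "0 \<le> Q"
  shows "ennreal (P * phi_rc \<phi> t1 + Q * (phi_rc \<phi> c - phi_rc \<phi> t1)) \<le> lorentz_norm \<phi> x"
proof -
  let ?F = "phi_rc \<phi>" let ?M = "interval_measure ?F"
  have Fm: "?F t1 \<le> ?F c" by (rule rc_mono[OF mono p0 t1(2)])
  have F0: "0 \<le> ?F t1" by (rule rc_nonneg[OF mono p0])
  have "ennreal (P * ?F t1 + Q * (?F c - ?F t1)) = ennreal P * ennreal (?F t1) + ennreal Q * ennreal (?F c - ?F t1)"
    using Fm F0 PQ by (simp add: ennreal_plus ennreal_mult)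
  also have "\<dots> = ennreal P * emeasure ?M {0..t1} + ennreal Q * emeasure ?M {t1<..c}"
    using rc_Icc[OF mono p0 t1(1)] emeasure_interval_measure_Ioc[OF t1(2) rc_mono[OF mono p0] rc_rcont[OF mono p0]]
    by simp
  also have "\<dots> = (\<integral>\<^sup>+t. (ennreal P * indicator {0..t1} t + ennreal Q * indicator {t1<..c} t) \<partial>?M)"
    by (simp add: nn_integral_add nn_integral_cmult_indicator)
  also have "\<dots> \<le> lorentz_norm \<phi> x"
    unfolding lorentz_norm_def
  proof (rule nn_integral_mono)
    fix t :: real
    consider "t \<in> {0..t1}" | "t \<in> {t1<..c}" | "t \<notin> {0..t1}" "t \<notin> {t1<..c}" by blast
    then show "ennreal P * indicator {0..t1} t + ennreal Q * indicator {t1<..c} t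
               \<le> decr_rearr x t * indicator {0..1} t"
    proof cases
      case 1
      have "ennreal t < emeasure lebesgue S"
        using lt 1 by (auto intro: le_less_trans[OF ennreal_leI])
      then have "ennreal P \<le> decr_rearr x t" by (rule decr_ge[OF xm S _ PS])
      then show ?thesis using 1 t1 by (auto simp: indicator_def)
    next
      case 2
      have "ennreal t < emeasure lebesgue {0..1::real}"
        using 2 t1 by (auto simp: ennreal_less_iff)
      then have "ennreal Q \<le> decr_rearr x t" by (intro decr_ge[OF xm _ _ _ Q01]) auto
      then show ?thesis using 2 t1 by (auto simp: indicator_def)
    qed (auto simp: indicator_def)
  qed
  finally show ?thesis .
qed

lemma norm_upper:
  fixes \<phi> x :: "real \<Rightarrow> real"
  assumes mono: "mono_on {0..1} \<phi>" and p0: "\<phi> 0 = 0"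
    and B: "\<forall>u\<in>{0..1}. \<bar>x u\<bar> \<le> B" "0 \<le> B"
  shows "lorentz_norm \<phi> x < \<infinity>"
proof -
  let ?F = "phi_rc \<phi>" let ?M = "interval_measure ?F"
  have d: "decr_rearr x t \<le> ennreal B" for t
  proof -
    have e: "{u \<in> {0..1}. ennreal B < ennreal \<bar>x u\<bar>} = {}"
      using B by (fastforce simp: ennreal_less_iff)
    have "distr_fun x (ennreal B) \<le> ennreal t" by (simp only: distr_fun_def e emeasure_empty zero_le)
    then show ?thesis unfolding decr_rearr_def by (auto intro: Inf_lower)
  qed
  have "lorentz_norm \<phi> x \<le> (\<integral>\<^sup>+t. ennreal B * indicator {0..1} t \<partial>?M)"
    unfolding lorentz_norm_def
    by (rule nn_integral_mono) (auto simp: indicator_def d)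
  also have "\<dots> = ennreal B * ennreal (?F 1)"
    by (simp add: nn_integral_cmult_indicator rc_Icc[OF mono p0])
  also have "\<dots> < \<infinity>" by (simp flip: ennreal_mult add: ennreal_mult_less_top)
  finally show ?thesis .
qed

theorem corollary5:
  fixes \<phi> :: "real \<Rightarrow> real"
  assumes "mono_on {0..1} \<phi>"
    and "concave_on {0..1} \<phi>"
    and "\<phi> 0 = 0" and "\<phi> 1 = 1"
    and "filterlim (\<lambda>t. \<phi> t / t) at_top (at_right 0)"
  shows "\<exists>f \<in> lorentz_space \<phi>.
           (LINT t:{0..1}|lebesgue. f t) \<noteq> 0 \<and>
           (\<forall>l::real. lorentz_norm \<phi> (\<lambda>t. 1 - l * f t) \<ge> 1)"
proof -
  note mono = assms(1) and conc = assms(2) and p0 = assms(3) and p1 = assms(4)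
  let ?F = "phi_rc \<phi>"
  have "\<forall>\<^sub>F t in at_right 0. 3 \<le> \<phi> t / t"
    using assms(5) by (simp add: filterlim_at_top)
  then obtain b where b: "b > 0" "\<And>y. 0 < y \<Longrightarrow> y < b \<Longrightarrow> 3 \<le> \<phi> y / y"
    unfolding eventually_at_right_field by auto
  define t0 where "t0 = min (b/2) (1/4)"
  have t0: "0 < t0" "t0 \<le> 1/4" "t0 < b" using b by (auto simp: t0_def)
  have "3 \<le> \<phi> t0 / t0" using b t0 by auto
  then have pt0: "3 * t0 \<le> \<phi> t0" using t0 by (simp add: field_simps)
  define a where "a = 2 * t0"
  define eta where "eta = min (\<phi> t0 - a) ((1 - a)/2)"
  define al where "al = a + eta"
  define be where "be = 1 - al"
  have a: "0 < a" "a \<le> 1/2" "t0 < a" using t0 by (auto simp: a_def)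
  have eta: "0 < eta" "eta \<le> (1-a)/2" "eta \<le> \<phi> t0 - a"
    using pt0 a t0 by (auto simp: eta_def a_def min_def)
  have al: "al \<le> \<phi> t0" "t0 < al" "al < 1" "0 < al" using eta a by (auto simp: al_def)
  have be: "0 < be" "be < 1 - a" "be < 1" using eta a by (auto simp: be_def al_def)
  have Ft0: "al \<le> ?F t0"
    using al rc_ge[OF mono p0, of t0] t0 by auto
  have Fbe: "be \<le> ?F be"
    using phi_facts[OF mono conc p0 p1, of be] rc_ge[OF mono p0, of be] be by auto
  have Fc: "c \<le> ?F c" if "0 \<le> c" "c < 1" for c
    using phi_facts[OF mono conc p0 p1, of c] rc_ge[OF mono p0, of c] that by auto
  define f where "f = (\<lambda>t::real. be - indicator {a..} t :: real)"
  have im: "indicator {a..} \<in> borel_measurable lebesgue"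
    by (rule borel_measurable_indicator) auto
  have fm: "f \<in> borel_measurable lebesgue" unfolding f_def using im by measurable
  have fb: "\<forall>u\<in>{0..1}. \<bar>f u\<bar> \<le> 1"
    using al be by (auto simp: f_def indicator_def be_def)
  have inL: "f \<in> lorentz_space \<phi>"
    unfolding lorentz_space_def
    using norm_upper[OF mono p0 fb] measurable_restrict_space1[OF fm] by auto
  have int: "(LINT t:{0..1}|lebesgue. f t) = a - al"
  proof -
    have eq: "(\<lambda>t. indicator {0..1} t *\<^sub>R f t) = (\<lambda>t. be * indicator {0..1} t - indicator {a..1} t)"
      using a by (auto simp: f_def indicator_def fun_eq_iff)
    have "(LINT t:{0..1}|lebesgue. f t) = be * measure lebesgue {0..1::real} - measure lebesgue {a..1}"
    proof -
      have i1: "integrable lebesgue (\<lambda>t. be * indicator {0..1::real} t)"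
        by (intro integrable_mult_right integrable_real_indicator) auto
      have i2: "integrable lebesgue (\<lambda>t. indicator {a..1::real} t :: real)"
        by (intro integrable_real_indicator) (auto simp: emeasure_lborel_Icc_eq)
      have m: "measure lebesgue {l..u::real} = u - l" if "l \<le> u" for l u
        using that by (simp add: measure_def emeasure_lborel_Icc_eq)
      show ?thesis
      proof -
        have m01: "measure lebesgue {0..1::real} = 1" using m[of 0 1] by simp
        have ma1: "measure lebesgue {a..1::real} = 1 - a" using m[of a 1] a by simp
        show ?thesis
          unfolding set_lebesgue_integral_def eq Bochner_Integration.integral_diff[OF i1 i2]
            integral_mult_right_zero Bochner_Integration.integral_indicator
          by simp
      qed
    qed
    also have "\<dots> = a - al" using a by (simp add: be_def measure_def emeasure_lborel_Icc_eq)
    finally show ?thesis .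
  qed
  have "\<forall>l::real. lorentz_norm \<phi> (\<lambda>t. 1 - l * f t) \<ge> 1"
  proof
    fix l :: real
    define x where "x = (\<lambda>t. 1 - l * f t)"
    define P where "P = \<bar>1 - l * be\<bar>"
    define Q where "Q = \<bar>1 + l * al\<bar>"
    have xm: "x \<in> borel_measurable lebesgue" unfolding x_def using fm by measurable
    have xA: "\<bar>x u\<bar> = P" if "u < a" for u using that by (simp add: x_def f_def P_def)
    have xB: "\<bar>x u\<bar> = Q" if "a \<le> u" for u
      using that by (simp add: x_def f_def Q_def be_def algebra_simps)
    have base: "1 \<le> P * al + Q * be"
    proof -
      have "(1 - l * be) * al \<le> P * al" using al by (intro mult_right_mono) (auto simp: P_def)
      moreover have "(1 + l * al) * be \<le> Q * be" using be by (intro mult_right_mono) (auto simp: Q_def)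
      moreover have "(1 - l * be) * al + (1 + l * al) * be = 1" by (simp add: be_def algebra_simps)
      ultimately show ?thesis by linarith
    qed
    have PQ: "0 \<le> P" "0 \<le> Q" by (auto simp: P_def Q_def)
    have key: "ennreal (1 - (P + Q) * (1 - c)) \<le> lorentz_norm \<phi> x"
      if c: "max al be \<le> c" "c < 1" for c
    proof (cases "Q \<le> P")
      case True
      have low: "\<forall>u\<in>{0..1}. Q \<le> \<bar>x u\<bar>"
        using xA xB True by (metis linorder_not_le order_refl)
      have "ennreal (P * ?F t0 + Q * (?F c - ?F t0)) \<le> lorentz_norm \<phi> x"
        by (rule norm_lower[OF mono p0 xm, of "{0..<a}"])
           (use a t0 al c xA low PQ in \<open>auto simp: ennreal_less_iff\<close>)
      moreover have "1 - (P + Q) * (1 - c) \<le> P * ?F t0 + Q * (?F c - ?F t0)"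
      proof -
        have "0 \<le> (P - Q) * (?F t0 - al)" using True Ft0 by simp
        moreover have "0 \<le> Q * (?F c - c)" using PQ Fc[of c] c al by simp
        moreover have "0 \<le> P * (1 - c)" using PQ c by simp
        ultimately show ?thesis using base by (simp add: be_def algebra_simps)
      qed
      ultimately show ?thesis by (meson ennreal_leI order_trans)
    next
      case False
      have low: "\<forall>u\<in>{0..1}. P \<le> \<bar>x u\<bar>"
        using xA xB False by (metis linorder_not_le order_refl less_imp_le)
      have "ennreal (Q * ?F be + P * (?F c - ?F be)) \<le> lorentz_norm \<phi> x"
        by (rule norm_lower[OF mono p0 xm, of "{a..1}"])
           (use a be c xB low PQ in \<open>auto simp: ennreal_less_iff\<close>)
      moreover have "1 - (P + Q) * (1 - c) \<le> Q * ?F be + P * (?F c - ?F be)"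
      proof -
        have "0 \<le> (Q - P) * (?F be - be)" using False Fbe by simp
        moreover have "0 \<le> P * (?F c - c)" using PQ Fc[of c] c be by simp
        moreover have "0 \<le> Q * (1 - c)" using PQ c by simp
        ultimately show ?thesis using base by (simp add: be_def algebra_simps)
      qed
      ultimately show ?thesis by (meson ennreal_leI order_trans)
    qed
    have "1 \<le> lorentz_norm \<phi> x"
    proof (rule ennreal_le_epsilon)
      fix e :: real assume e: "0 < e"
      define d where "d = min e (1/2)"
      have d: "0 < d" "d \<le> e" "d \<le> 1/2" using e by (auto simp: d_def)
      define c where "c = max (max al be) (1 - d / (P + Q + 1))"
      have c: "max al be \<le> c" "c < 1" using al be d PQ by (auto simp: c_def)
      have "(P + Q) * (1 - c) \<le> (P + Q) * (d / (P + Q + 1))"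
        using PQ by (intro mult_left_mono) (auto simp: c_def)
      also have "\<dots> \<le> d" using PQ d by (simp add: field_simps)
      finally have pq: "(P + Q) * (1 - c) \<le> d" .
      have nn: "0 \<le> (P + Q) * (1 - c)" using PQ c by simp
      have "(1::ennreal) = ennreal (1 - (P + Q) * (1 - c)) + ennreal ((P + Q) * (1 - c))"
        using pq d nn by (simp flip: ennreal_plus)
      also have "\<dots> \<le> lorentz_norm \<phi> x + ennreal e"
        using key[OF c] pq d by (intro add_mono) (auto intro: ennreal_leI)
      finally show "1 \<le> lorentz_norm \<phi> x + ennreal e" .
    qed
    then show "lorentz_norm \<phi> (\<lambda>t. 1 - l * f t) \<ge> 1" by (simp add: x_def)
  qed
  moreover have "a - al \<noteq> 0" using eta by (simp add: al_def)
  ultimately show ?thesis using inL int by (intro bexI[of _ f]) auto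
qed

end
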